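(* Let $X$ be a complex Banach space of dimension at least $2$, and let $\mathcal S\subseteq\mathcal B(X)$ be a multiplicative semigroup such that $\operatorname{rank}[S,T]\le 1$ for all $S,T\in\mathcal S$. Suppose that $A,B\in\mathcal S$ satisfy $[A,B]=y\otimes\phi$ for some non-zero vector $y\in X$ and some non-zero functional $\phi\in X^*$. Then $\phi(Cy)=0$ for every $C\in\mathcal S\cup\{I\}$.
   Context: $\mathcal B(X)$ is the algebra of bounded linear operators on $X$ and $I$ is the identity operator. A semigroup is a subset of $\mathcal B(X)$ closed under multiplication. $[S,T]=ST-TS$. For $y\in X$ and $\phi\in X^*$, $y\otimes\phi$ denotes the operator $x\mapsto\phi(x)y$. *)

theory Defs
  imports "HOL-Analysis.Analysis"
begin

class complex_banach = banach +
  fixes cscale :: "complex \<Rightarrow> 'a \<Rightarrow> 'a"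
  assumes cscale_add_right: "cscale a (x + y) = cscale a x + cscale a y"
    and cscale_add_left: "cscale (a + b) x = cscale a x + cscale b x"
    and cscale_cscale: "cscale a (cscale b x) = cscale (a * b) x"
    and cscale_one: "cscale 1 x = x"
    and scaleR_cscale: "scaleR r x = cscale (complex_of_real r) x"
    and norm_cscale: "norm (cscale a x) = cmod a * norm x"

definition bop :: "('a::complex_banach \<Rightarrow> 'a) \<Rightarrow> bool" where
  "bop T \<longleftrightarrow> bounded_linear T \<and> (\<forall>c x. T (cscale c x) = cscale c (T x))"

definition cfunctional :: "('a::complex_banach \<Rightarrow> complex) \<Rightarrow> bool" where
  "cfunctional \<phi> \<longleftrightarrow> bounded_linear \<phi> \<and> (\<forall>c x. \<phi> (cscale c x) = c * \<phi> x)"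

definition commutator :: "('a::complex_banach \<Rightarrow> 'a) \<Rightarrow> ('a \<Rightarrow> 'a) \<Rightarrow> ('a \<Rightarrow> 'a)" where
  "commutator S T = (\<lambda>x. S (T x) - T (S x))"

definition rank_le_one :: "('a::complex_banach \<Rightarrow> 'a) \<Rightarrow> bool" where
  "rank_le_one T \<longleftrightarrow> (\<exists>v. \<forall>x. \<exists>c. T x = cscale c v)"

definition tensor_op :: "'a::complex_banach \<Rightarrow> ('a \<Rightarrow> complex) \<Rightarrow> ('a \<Rightarrow> 'a)" where
  "tensor_op y \<phi> = (\<lambda>x. cscale (\<phi> x) y)"

definition cdim_ge_two :: "'a::complex_banach itself \<Rightarrow> bool" where
  "cdim_ge_two _ \<longleftrightarrow> (\<exists>u v::'a. \<forall>a b. cscale a u + cscale b v = 0 \<longrightarrow> a = 0 \<and> b = 0)"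

end

theory Submission
  imports Defs
begin


lemma cs_vs: "vector_space (cscale :: complex \<Rightarrow> 'a::complex_banach \<Rightarrow> 'a)"
  by unfold_locales (auto simp: cscale_add_right cscale_add_left cscale_cscale cscale_one)
lemma cs_mod: "module (cscale :: complex \<Rightarrow> 'a::complex_banach \<Rightarrow> 'a)"
  using cs_vs module_iff_vector_space by blast

lemmas cs_simps[simp] = module.scale_zero_left[OF cs_mod] module.scale_zero_right[OF cs_mod]
  module.scale_minus_left[OF cs_mod] module.scale_minus_right[OF cs_mod]
  vector_space.scale_eq_0_iff[OF cs_vs] cscale_one cscale_cscale

lemmas cs_dist = module.scale_left_diff_distrib[OF cs_mod] module.scale_right_diff_distrib[OF cs_mod]
  cscale_add_left cscale_add_right

lemma cs_solve: "(a::complex) \<noteq> 0 \<Longrightarrow> cscale a x = y \<Longrightarrow> x = cscale (inverse a) y"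
  by (drule sym) simp

definition olin :: "('a::complex_banach \<Rightarrow> 'a) \<Rightarrow> bool" where
  "olin T \<longleftrightarrow> (\<forall>x y. T (x + y) = T x + T y) \<and> (\<forall>c x. T (cscale c x) = cscale c (T x))"
definition flin :: "('a::complex_banach \<Rightarrow> complex) \<Rightarrow> bool" where
  "flin f \<longleftrightarrow> (\<forall>x y. f (x + y) = f x + f y) \<and> (\<forall>c x. f (cscale c x) = c * f x)"

lemma olin_add: "olin T \<Longrightarrow> T (x + y) = T x + T y" by (simp add: olin_def)
lemma olin_scale: "olin T \<Longrightarrow> T (cscale c x) = cscale c (T x)" by (simp add: olin_def)
lemma olin_0: "olin T \<Longrightarrow> T 0 = 0" using olin_add[of T 0 0] by simp
lemma olin_neg: "olin T \<Longrightarrow> T (- x) = - T x"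
  using olin_add[of T "-x" x] olin_0[of T] by (simp add: eq_neg_iff_add_eq_0)
lemma olin_diff: "olin T \<Longrightarrow> T (x - y) = T x - T y"
  using olin_add[of T x "-y"] olin_neg[of T y] by simp
lemmas olin_simps = olin_add olin_scale olin_0 olin_neg olin_diff

lemma flin_add: "flin f \<Longrightarrow> f (x + y) = f x + f y" by (simp add: flin_def)
lemma flin_scale: "flin f \<Longrightarrow> f (cscale c x) = c * f x" by (simp add: flin_def)
lemma flin_0: "flin f \<Longrightarrow> f 0 = 0" using flin_add[of f 0 0] by simp
lemma flin_neg: "flin f \<Longrightarrow> f (- x) = - f x"
  using flin_add[of f "-x" x] flin_0[of f] by (simp add: eq_neg_iff_add_eq_0)
lemma flin_diff: "flin f \<Longrightarrow> f (x - y) = f x - f y"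
  using flin_add[of f x "-y"] flin_neg[of f y] by simp
lemmas flin_simps = flin_add flin_scale flin_0 flin_neg flin_diff

lemma flin_comp: "flin f \<Longrightarrow> olin T \<Longrightarrow> flin (\<lambda>x. f (T x))"
  unfolding flin_def olin_def by simp
lemma flin_cmul: "flin f \<Longrightarrow> flin (\<lambda>x. c * f x)"
  unfolding flin_def by (simp add: algebra_simps)
lemma flin_plus: "flin f \<Longrightarrow> flin g \<Longrightarrow> flin (\<lambda>x. f x + g x)"
  unfolding flin_def by (simp add: algebra_simps)
lemma flin_uminus: "flin f \<Longrightarrow> flin (\<lambda>x. - f x)"
  unfolding flin_def by (simp add: algebra_simps)

lemma olin_comm: "olin X \<Longrightarrow> olin Y \<Longrightarrow> olin (commutator X Y)"
  unfolding commutator_def olin_def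
  by (simp add: cs_dist algebra_simps)

lemma rank_rep:
  assumes "olin T" "rank_le_one T"
  shows "\<exists>u f. flin f \<and> (\<forall>x. T x = cscale (f x) u)"
proof -
  obtain v where v: "\<forall>x. \<exists>c. T x = cscale c v" using assms(2) rank_le_one_def by blast
  show ?thesis
  proof (cases "v = 0")
    case True
    then show ?thesis using v by (intro exI[of _ 0] exI[of _ "\<lambda>_. 0"]) (auto simp: flin_def)
  next
    case False
    define f where "f x = (SOME c. T x = cscale c v)" for x
    have f: "T x = cscale (f x) v" for x unfolding f_def using v by (metis (mono_tags) someI_ex)
    have "flin f" unfolding flin_def
    proof (intro conjI allI)
      fix x y
      have "cscale (f (x+y)) v = cscale (f x + f y) v"
        using f[of "x+y"] f[of x] f[of y] olin_add[OF assms(1)] by (simp add: cs_dist)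
      then show "f (x + y) = f x + f y" using False
        by (metis vector_space.scale_cancel_right[OF cs_vs])
    next
      fix c x
      have "cscale (f (cscale c x)) v = cscale (c * f x) v"
        using f[of "cscale c x"] f[of x] olin_scale[OF assms(1)] by simp
      then show "f (cscale c x) = c * f x" using False
        by (metis vector_space.scale_cancel_right[OF cs_vs])
    qed
    then show ?thesis using f by blast
  qed
qed



definition vpar :: "'a::complex_banach \<Rightarrow> 'a \<Rightarrow> bool" where
  "vpar u v \<longleftrightarrow> (\<exists>c. u = cscale c v) \<or> (\<exists>c. v = cscale c u)"
definition fpar :: "('a::complex_banach \<Rightarrow> complex) \<Rightarrow> ('a \<Rightarrow> complex) \<Rightarrow> bool" where
  "fpar f g \<longleftrightarrow> (\<exists>c. \<forall>x. f x = c * g x) \<or> (\<exists>c. \<forall>x. g x = c * f x)"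

lemma vpar_sym: "vpar u v \<Longrightarrow> vpar v u" unfolding vpar_def by blast
lemma fpar_sym: "fpar f g \<Longrightarrow> fpar g f" unfolding fpar_def by blast
lemma fpar_neg: "fpar f (\<lambda>x. - g x) \<Longrightarrow> fpar f g"
proof -
  assume "fpar f (\<lambda>x. - g x)"
  then consider c where "\<forall>x. f x = c * - g x" | c where "\<forall>x. - g x = c * f x"
    unfolding fpar_def by blast
  then show ?thesis
  proof cases
    case (1 c) then have "\<forall>x. f x = (- c) * g x" by simp
    then show ?thesis unfolding fpar_def by blast
  next
    case (2 c) then have "\<forall>x. g x = (- c) * f x" by (metis minus_equation_iff mult_minus_left)
    then show ?thesis unfolding fpar_def by blast
  qed
qed

lemma vpar_nz: assumes "vpar a b" "b \<noteq> 0" shows "\<exists>c. a = cscale c b"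
proof -
  { fix c assume c: "b = cscale c a"
    then have "c \<noteq> 0" using assms(2) by auto
    then have "a = cscale (inverse c) b" using cs_solve[of c a b] c by simp
    then have ?thesis by blast }
  then show ?thesis using assms(1) unfolding vpar_def by blast
qed

lemma vpar_nz2: assumes "vpar a b" "a \<noteq> 0" "b \<noteq> 0" shows "\<exists>c. c \<noteq> 0 \<and> a = cscale c b"
  using vpar_nz[OF assms(1,3)] assms(2) by fastforce

lemma fpar_nz: assumes "fpar f g" "g w \<noteq> 0" shows "\<exists>c. \<forall>x. f x = c * g x"
proof -
  { fix c assume c: "\<forall>x. g x = c * f x"
    then have "c \<noteq> 0" using assms(2) by auto
    then have "\<forall>x. f x = inverse c * g x" using c by (simp add: field_simps)
    then have ?thesis by blast }
  then show ?thesis using assms(1) unfolding fpar_def by blast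
qed

lemma fpar_nz2: assumes "fpar f g" "g w \<noteq> 0" "f w' \<noteq> 0" shows "\<exists>c. c \<noteq> 0 \<and> (\<forall>x. f x = c * g x)"
proof -
  obtain c where c: "\<forall>x. f x = c * g x" using fpar_nz[OF assms(1,2)] by blast
  then have "c \<noteq> 0" using assms(3) by (metis mult_zero_left)
  then show ?thesis using c by blast
qed

lemma r1l:
  assumes f1: "flin f1" and f2: "flin f2" and rk: "rank_le_one T"
    and T: "\<forall>x. T x = cscale (f1 x) u1 + cscale (f2 x) u2"
  shows "vpar u1 u2 \<or> fpar f1 f2"
proof -
  obtain v where v: "\<forall>x. \<exists>c. T x = cscale c v" using rk rank_le_one_def by blast
  show ?thesis
  proof (cases "\<forall>x. f1 x = 0")
    case True then show ?thesis unfolding fpar_def by (intro disjI2 disjI1 exI[of _ 0]) auto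
  next
    case False
    then obtain x0 where x0: "f1 x0 \<noteq> 0" by blast
    show ?thesis
    proof (cases "u2 = 0")
      case True then show ?thesis unfolding vpar_def by (intro disjI1 disjI2 exI[of _ 0]) auto
    next
      case u2: False
      show ?thesis
      proof (cases "\<forall>x. f1 x0 * f2 x = f2 x0 * f1 x")
        case True
        then have "\<forall>x. f2 x = (f2 x0 / f1 x0) * f1 x" using x0 by (simp add: field_simps)
        then show ?thesis unfolding fpar_def by blast
      next
        case False
        then obtain x1 where x1: "f1 x0 * f2 x1 - f2 x0 * f1 x1 \<noteq> 0" by auto
        define d where "d = f1 x0 * f2 x1 - f2 x0 * f1 x1"
        define x' where "x' = cscale (f1 x0) x1 - cscale (f1 x1) x0"
        have "f1 x' = 0" unfolding x'_def using f1 by (simp add: flin_simps)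
        moreover have "f2 x' = d" unfolding x'_def d_def using f2 by (simp add: flin_simps)
        ultimately have Tx': "T x' = cscale d u2" using T by simp
        obtain c1 where c1: "T x' = cscale c1 v" using v by blast
        obtain c2 where c2: "T x0 = cscale c2 v" using v by blast
        have dnz: "d \<noteq> 0" using x1 d_def by simp
        have c1nz: "c1 \<noteq> 0" using Tx' c1 dnz u2 by auto
        have vv: "v = cscale (inverse c1 * d) u2" using cs_solve[OF c1nz, of v "cscale d u2"] Tx' c1 by simp
        have "cscale (f1 x0) u1 + cscale (f2 x0) u2 = cscale (c2 * (inverse c1 * d)) u2"
          using T c2 vv by simp
        then have "cscale (f1 x0) u1 = cscale (c2 * (inverse c1 * d) - f2 x0) u2"
          by (simp add: cs_dist eq_diff_eq)
        then have "u1 = cscale (inverse (f1 x0) * (c2 * (inverse c1 * d) - f2 x0)) u2"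
          using cs_solve[OF x0, of u1] by simp
        then show ?thesis unfolding vpar_def by blast
      qed
    qed
  qed
qed



lemma exp_rules:
  assumes X: "olin X" and Y: "olin Y" and f: "flin f"
    and K: "\<And>z. X (Y z) = Y (X z) + cscale (f z) u"
  shows "commutator (X \<circ> X) Y x = cscale (f x) (X u) + cscale (f (X x)) u"
    and "commutator X (Y \<circ> Y) x = cscale (f (Y x)) u + cscale (f x) (Y u)"
    and "commutator (X \<circ> X) (Y \<circ> Y) x = cscale (f (X x)) (Y u) + cscale (f (Y (X x))) u
          + cscale (f x) (X (Y u)) + cscale (f (Y x)) (X u)"
  unfolding commutator_def comp_def
  by (simp_all add: K olin_simps[OF X] olin_simps[OF Y] algebra_simps)

lemma comm_K: "\<forall>x. commutator X Y x = cscale (f x) u \<Longrightarrow> X (Y z) = Y (X z) + cscale (f z) u"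
proof -
  assume "\<forall>x. commutator X Y x = cscale (f x) u"
  then have "X (Y z) - Y (X z) = cscale (f z) u" unfolding commutator_def by simp
  then show ?thesis by (simp add: algebra_simps)
qed

lemma caseA:
  assumes X: "olin X" and Y: "olin Y" and f: "flin f"
    and K: "\<forall>x. commutator X Y x = cscale (f x) u"
    and a: "X u = cscale a u" and b: "Y u = cscale b u"
  shows "f u = 0"
proof -
  have "commutator X Y u = 0" unfolding commutator_def
    using a b by (simp add: olin_simps[OF X] olin_simps[OF Y] mult.commute)
  then have "cscale (f u) u = 0" using K by simp
  then show ?thesis using flin_0[OF f] by auto
qed

lemma caseB:
  assumes X: "olin X" and Y: "olin Y" and f: "flin f"
    and K: "\<forall>x. commutator X Y x = cscale (f x) u"
    and a: "\<forall>z. f (X z) = a * f z" and b: "\<forall>z. f (Y z) = b * f z"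
  shows "f u = 0"
proof -
  have "f (commutator X Y u) = 0" unfolding commutator_def
    using a b by (simp add: flin_simps[OF f])
  then have "f u * f u = 0" using K by (simp add: flin_simps[OF f])
  then show ?thesis by simp
qed

locale rsg =
  fixes SS :: "('a::complex_banach \<Rightarrow> 'a) set"
  assumes lin: "X \<in> SS \<Longrightarrow> olin X"
  and clo: "X \<in> SS \<Longrightarrow> Y \<in> SS \<Longrightarrow> X \<circ> Y \<in> SS"
  and rk: "X \<in> SS \<Longrightarrow> Y \<in> SS \<Longrightarrow> rank_le_one (commutator X Y)"
begin

lemma caseC:
  assumes XS: "X \<in> SS" and YS: "Y \<in> SS" and f: "flin f"
    and K: "\<forall>x. commutator X Y x = cscale (f x) u"
    and a: "X u = cscale a u" and b: "\<forall>z. f (Y z) = b * f z"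
  shows "f u = 0"
proof (rule ccontr)
  assume lnz: "f u \<noteq> 0"
  define l where "l = f u"
  have X: "olin X" and Y: "olin Y" using lin XS YS by auto
  have unz: "u \<noteq> 0" using lnz flin_0[OF f] by auto
  have K': "\<And>z. X (Y z) = Y (X z) + cscale (f z) u"
    using comm_K[OF K] by blast
  define w where "w = Y u + cscale b u"
  define p where "p = X (Y u) + cscale (a * b) u"
  have XYu: "X (Y u) = cscale a (Y u) + cscale l u"
    using K'[of u] a l_def by (simp add: olin_simps[OF Y])
  have pw: "p = cscale a w + cscale l u"
    unfolding p_def w_def XYu by (simp add: cs_dist algebra_simps)
  have E: "\<forall>x. commutator (X \<circ> X) (Y \<circ> Y) x = cscale (f x) p + cscale (f (X x)) w"
  proof
    fix x
    show "commutator (X \<circ> X) (Y \<circ> Y) x = cscale (f x) p + cscale (f (X x)) w"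
      unfolding exp_rules(3)[OF X Y f K'] p_def w_def using a b
      by (simp add: cs_dist algebra_simps)
  qed
  have R: "rank_le_one (commutator (X \<circ> X) (Y \<circ> Y))" using rk clo XS YS by auto
  have "vpar p w \<or> fpar f (\<lambda>x. f (X x))"
    by (rule r1l[OF f flin_comp[OF f X] R E])
  then show False
  proof
    assume "fpar f (\<lambda>x. f (X x))"
    then obtain a' where "\<forall>z. f (X z) = a' * f z"
      using fpar_nz[OF fpar_sym, of f "\<lambda>x. f (X x)" u] lnz by blast
    then show False using caseB[OF X Y f K _ b] lnz by blast
  next
    assume vp: "vpar p w"
    have "\<exists>\<beta>. w = cscale \<beta> u"
    proof -
      { fix c assume c: "p = cscale c w"
        then have e: "cscale l u = cscale (c - a) w" using pw by (simp add: cs_dist eq_diff_eq add.commute)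
        then have ca: "c - a \<noteq> 0" using lnz unz l_def by auto
        have "w = cscale (inverse (c - a)) (cscale l u)" using cs_solve[OF ca, of w "cscale l u"] e by simp
        then have "w = cscale (inverse (c - a) * l) u" by simp
        then have ?thesis by blast }
      moreover
      { fix c assume c: "w = cscale c p"
        then have "w = cscale (c * a) w + cscale (c * l) u" using pw by (simp add: cs_dist)
        then have e: "cscale (1 - c * a) w = cscale (c * l) u" by (simp add: cs_dist algebra_simps)
        have "1 - c * a \<noteq> 0"
        proof
          assume "1 - c * a = 0"
          then have "c \<noteq> 0" by auto
          then show False using e \<open>1 - c * a = 0\<close> lnz unz l_def by simp
        qed
        then have "w = cscale (inverse (1 - c * a)) (cscale (c * l) u)" using cs_solve[of "1 - c * a" w] e by simp
        then have "w = cscale (inverse (1 - c * a) * (c * l)) u" by simp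
        then have ?thesis by blast }
      ultimately show ?thesis using vp unfolding vpar_def by blast
    qed
    then obtain \<beta> where "w = cscale \<beta> u" by blast
    then have "Y u = cscale (\<beta> - b) u" unfolding w_def by (simp add: cs_dist eq_diff_eq)
    then show False using caseA[OF X Y f K a] lnz by blast
  qed
qed

end


context rsg begin

lemma L1:
  assumes XS: "X \<in> SS" and YS: "Y \<in> SS" and f: "flin f"
    and K: "\<forall>x. commutator X Y x = cscale (f x) u"
  shows "f u = 0"
proof (rule ccontr)
  assume lnz: "f u \<noteq> 0"
  have X: "olin X" and Y: "olin Y" using lin XS YS by auto
  have unz: "u \<noteq> 0" using lnz flin_0[OF f] by auto
  have K': "\<And>z. X (Y z) = Y (X z) + cscale (f z) u" using comm_K[OF K] by blast
  have R1: "rank_le_one (commutator (X \<circ> X) Y)" using rk clo XS YS by auto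
  have R2: "rank_le_one (commutator X (Y \<circ> Y))" using rk clo XS YS by auto
  have "vpar (X u) u \<or> fpar f (\<lambda>x. f (X x))"
    by (rule r1l[OF f flin_comp[OF f X] R1]) (simp add: exp_rules(1)[OF X Y f K'])
  then have dX: "(\<exists>a. X u = cscale a u) \<or> (\<exists>a. \<forall>z. f (X z) = a * f z)"
    using vpar_nz[of "X u" u] unz fpar_nz[OF fpar_sym, of f "\<lambda>x. f (X x)" u] lnz by blast
  have "vpar u (Y u) \<or> fpar (\<lambda>x. f (Y x)) f"
    by (rule r1l[OF flin_comp[OF f Y] f R2]) (simp add: exp_rules(2)[OF X Y f K'])
  then have dY: "(\<exists>b. Y u = cscale b u) \<or> (\<exists>b. \<forall>z. f (Y z) = b * f z)"
    using vpar_nz[OF vpar_sym, of u "Y u"] unz fpar_nz[of "\<lambda>x. f (Y x)" f u] lnz by blast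
  have Ksw: "\<forall>x. commutator Y X x = cscale (- f x) u"
    using K unfolding commutator_def by (metis minus_diff_eq cs_simps(3))
  show False
    using dX dY
  proof (elim disjE exE)
    fix a b assume "X u = cscale a u" "Y u = cscale b u"
    then show False using caseA[OF X Y f K] lnz by blast
  next
    fix a b assume "X u = cscale a u" "\<forall>z. f (Y z) = b * f z"
    then show False using caseC[OF XS YS f K] lnz by blast
  next
    fix a b assume a: "\<forall>z. f (X z) = a * f z" and b: "Y u = cscale b u"
    have a': "\<forall>z. - f (X z) = a * - f z" using a by simp
    have "(\<lambda>x. - f x) u = 0"
      by (rule caseC[OF YS XS flin_uminus[OF f] Ksw b a'])
    then show False using lnz by simp
  next
    fix a b assume "\<forall>z. f (X z) = a * f z" "\<forall>z. f (Y z) = b * f z"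
    then show False using caseB[OF X Y f K] lnz by blast
  qed
qed

lemma TA2:
  assumes XS: "X \<in> SS" and YS: "Y \<in> SS" and g1: "flin g1" and g2: "flin g2"
    and K: "\<forall>x. commutator X Y x = cscale (g1 x) w1 + cscale (g2 x) w2"
  shows "g1 w1 + g2 w2 = 0"
proof -
  have "vpar w1 w2 \<or> fpar g1 g2" using r1l[OF g1 g2 rk[OF XS YS] K] .
  then consider c where "w1 = cscale c w2" | c where "w2 = cscale c w1"
    | c where "\<forall>x. g1 x = c * g2 x" | c where "\<forall>x. g2 x = c * g1 x"
    unfolding vpar_def fpar_def by blast
  then show ?thesis
  proof cases
    case (1 c)
    have "\<forall>x. commutator X Y x = cscale (c * g1 x + g2 x) w2" using K 1 by (simp add: cs_dist mult.commute)
    then have "c * g1 w2 + g2 w2 = 0" using L1[OF XS YS flin_plus[OF flin_cmul[OF g1] g2]] by blast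
    then show ?thesis using 1 by (simp add: flin_simps[OF g1])
  next
    case (2 c)
    have "\<forall>x. commutator X Y x = cscale (g1 x + c * g2 x) w1" using K 2 by (simp add: cs_dist mult.commute)
    then have "g1 w1 + c * g2 w1 = 0" using L1[OF XS YS flin_plus[OF g1 flin_cmul[OF g2]]] by blast
    then show ?thesis using 2 by (simp add: flin_simps[OF g2])
  next
    case (3 c)
    have "\<forall>x. commutator X Y x = cscale (g2 x) (cscale c w1 + w2)" using K 3 by (simp add: cs_dist mult.commute)
    then have "g2 (cscale c w1 + w2) = 0" using L1[OF XS YS g2] by blast
    then show ?thesis using 3 by (simp add: flin_simps[OF g2])
  next
    case (4 c)
    have "\<forall>x. commutator X Y x = cscale (g1 x) (w1 + cscale c w2)" using K 4 by (simp add: cs_dist mult.commute)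
    then have "g1 (w1 + cscale c w2) = 0" using L1[OF XS YS g1] by blast
    then show ?thesis using 4 by (simp add: flin_simps[OF g1])
  qed
qed

end


lemma OD:
  assumes d: "vpar w1 w2 \<or> fpar g1 g2" and g1: "flin g1" and g2: "flin g2"
    and n1: "g1 w1 \<noteq> 0" and n2: "g2 w2 \<noteq> 0"
  shows "g1 w2 \<noteq> 0 \<and> g2 w1 \<noteq> 0"
proof -
  have w1: "w1 \<noteq> 0" using n1 flin_0[OF g1] by auto
  have w2: "w2 \<noteq> 0" using n2 flin_0[OF g2] by auto
  from d show ?thesis
  proof
    assume "vpar w1 w2"
    then obtain c where c: "c \<noteq> 0" "w1 = cscale c w2" using vpar_nz2 w1 w2 by blast
    then show ?thesis using n1 n2 by (simp add: flin_simps[OF g1] flin_simps[OF g2])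
  next
    assume "fpar g1 g2"
    then obtain c where c: "c \<noteq> 0" "\<forall>x. g1 x = c * g2 x" using fpar_nz2[of g1 g2 w2 w1] n1 n2 by blast
    then show ?thesis using n1 n2 by simp
  qed
qed

lemma vchain:
  assumes "vpar b a" "vpar a c" "a \<noteq> 0" "b \<noteq> 0" "flin g" "g b = 0"
  shows "g c = 0"
proof -
  obtain k where k: "c = cscale k a" using vpar_nz[OF vpar_sym[OF assms(2)] assms(3)] by blast
  obtain m where m: "a = cscale m b" using vpar_nz[OF vpar_sym[OF assms(1)] assms(4)] by blast
  show ?thesis using k m assms(5,6) by (simp add: flin_simps)
qed

lemma fchain:
  assumes "fpar l h" "fpar h g" "h w1 \<noteq> 0" "l w2 \<noteq> 0" "l b = 0"
  shows "g b = 0"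
proof -
  obtain k where k: "\<forall>x. g x = k * h x" using fpar_nz[OF fpar_sym[OF assms(2)] assms(3)] by blast
  obtain m where m: "\<forall>x. h x = m * l x" using fpar_nz[OF fpar_sym[OF assms(1)] assms(4)] by blast
  show ?thesis using k m assms(5) by simp
qed

context rsg begin

lemma main:
  assumes AS: "A \<in> SS" and BS: "B \<in> SS" and CS: "C \<in> SS" and f1: "flin \<phi>"
    and K1: "\<forall>x. commutator A B x = cscale (\<phi> x) y"
  shows "\<phi> (C y) = 0"
proof (rule ccontr)
  assume mnz: "\<phi> (C y) \<noteq> 0"
  have A: "olin A" and B: "olin B" and C: "olin C" using lin AS BS CS by auto
  obtain y2 \<phi>2 where f2: "flin \<phi>2" and K2: "\<forall>x. commutator B C x = cscale (\<phi>2 x) y2"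
    using rank_rep[OF olin_comm[OF B C] rk[OF BS CS]] by blast
  obtain y3 \<phi>3 where f3: "flin \<phi>3" and K3: "\<forall>x. commutator C A x = cscale (\<phi>3 x) y3"
    using rank_rep[OF olin_comm[OF C A] rk[OF CS AS]] by blast
  have t1: "\<phi> y = 0" using L1[OF AS BS f1 K1] .
  have t2: "\<phi>2 y2 = 0" using L1[OF BS CS f2 K2] .
  have t3: "\<phi>3 y3 = 0" using L1[OF CS AS f3 K3] .
  have R1: "\<And>z. A (B z) = B (A z) + cscale (\<phi> z) y" using comm_K[OF K1] by blast
  have R2: "\<And>z. B (C z) = C (B z) + cscale (\<phi>2 z) y2" using comm_K[OF K2] by blast
  have R3: "\<And>z. C (A z) = A (C z) + cscale (\<phi>3 z) y3" using comm_K[OF K3] by blast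
  have R1': "\<And>z. B (A z) = A (B z) - cscale (\<phi> z) y" using R1 by (simp add: algebra_simps)
  have R2': "\<And>z. C (B z) = B (C z) - cscale (\<phi>2 z) y2" using R2 by (simp add: algebra_simps)
  have R3': "\<And>z. A (C z) = C (A z) - cscale (\<phi>3 z) y3" using R3 by (simp add: algebra_simps)
  note LS = olin_simps[OF A] olin_simps[OF B] olin_simps[OF C]
  have e1: "\<forall>x. commutator (C \<circ> A) B x = cscale (\<phi> x) (C y) + cscale (- \<phi>2 (A x)) y2"
    unfolding commutator_def comp_def by (simp add: R1 R2 LS algebra_simps)
  have e2: "\<forall>x. commutator (A \<circ> C) B x = cscale (\<phi> (C x)) y + cscale (- \<phi>2 x) (A y2)"
    unfolding commutator_def comp_def by (simp add: R1 R2' LS algebra_simps)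
  have e3: "\<forall>x. commutator (A \<circ> B) C x = cscale (\<phi>2 x) (A y2) + cscale (- \<phi>3 (B x)) y3"
    unfolding commutator_def comp_def by (simp add: R2 R3 LS algebra_simps)
  have e4: "\<forall>x. commutator (B \<circ> A) C x = cscale (\<phi>2 (A x)) y2 + cscale (- \<phi>3 x) (B y3)"
    unfolding commutator_def comp_def by (simp add: R2 R3' LS algebra_simps)
  have e5: "\<forall>x. commutator (B \<circ> C) A x = cscale (\<phi>3 x) (B y3) + cscale (- \<phi> (C x)) y"
    unfolding commutator_def comp_def by (simp add: R1 R3 LS algebra_simps)
  have e6: "\<forall>x. commutator (C \<circ> B) A x = cscale (\<phi>3 (B x)) y3 + cscale (- \<phi> x) (C y)"
    unfolding commutator_def comp_def by (simp add: R1' R3 LS algebra_simps)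
  have fA2: "flin (\<lambda>x. \<phi>2 (A x))" using flin_comp[OF f2 A] .
  have fB3: "flin (\<lambda>x. \<phi>3 (B x))" using flin_comp[OF f3 B] .
  have fC1: "flin (\<lambda>x. \<phi> (C x))" using flin_comp[OF f1 C] .
  have m2: "\<phi>2 (A y2) = \<phi> (C y)"
    using TA2[OF clo[OF CS AS] BS f1 flin_uminus[OF fA2] e1] by simp
  have m3: "\<phi>3 (B y3) = \<phi> (C y)"
    using TA2[OF clo[OF BS CS] AS f3 flin_uminus[OF fC1] e5] by simp
  have d1: "vpar (C y) y2 \<or> fpar \<phi> (\<lambda>x. - \<phi>2 (A x))"
    by (rule r1l[OF f1 flin_uminus[OF fA2] rk[OF clo[OF CS AS] BS] e1])
  have d2: "vpar y (A y2) \<or> fpar (\<lambda>x. \<phi> (C x)) (\<lambda>x. - \<phi>2 x)"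
    by (rule r1l[OF fC1 flin_uminus[OF f2] rk[OF clo[OF AS CS] BS] e2])
  have d3: "vpar (A y2) y3 \<or> fpar \<phi>2 (\<lambda>x. - \<phi>3 (B x))"
    by (rule r1l[OF f2 flin_uminus[OF fB3] rk[OF clo[OF AS BS] CS] e3])
  have d4: "vpar y2 (B y3) \<or> fpar (\<lambda>x. \<phi>2 (A x)) (\<lambda>x. - \<phi>3 x)"
    by (rule r1l[OF fA2 flin_uminus[OF f3] rk[OF clo[OF BS AS] CS] e4])
  have d5: "vpar (B y3) y \<or> fpar \<phi>3 (\<lambda>x. - \<phi> (C x))"
    by (rule r1l[OF f3 flin_uminus[OF fC1] rk[OF clo[OF BS CS] AS] e5])
  have d6: "vpar y3 (C y) \<or> fpar (\<lambda>x. \<phi>3 (B x)) (\<lambda>x. - \<phi> x)"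
    by (rule r1l[OF fB3 flin_uminus[OF f1] rk[OF clo[OF CS BS] AS] e6])
  have c1: "\<phi> y2 \<noteq> 0" using OD[OF d1 f1 flin_uminus[OF fA2]] mnz m2 by simp
  have c2: "\<phi>2 y \<noteq> 0" using OD[OF d2 fC1 flin_uminus[OF f2]] mnz m2 by simp
  have c3: "\<phi>2 y3 \<noteq> 0" using OD[OF d3 f2 flin_uminus[OF fB3]] mnz m2 m3 by simp
  have c4: "\<phi>3 y2 \<noteq> 0" using OD[OF d4 fA2 flin_uminus[OF f3]] mnz m2 m3 by simp
  have c5: "\<phi>3 y \<noteq> 0" using OD[OF d5 f3 flin_uminus[OF fC1]] mnz m3 by simp
  have c6: "\<phi> y3 \<noteq> 0" using OD[OF d6 fB3 flin_uminus[OF f1]] mnz m3 by simp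
  have ynz: "y \<noteq> 0" using mnz olin_0[OF C] flin_0[OF f1] by auto
  have Cynz: "C y \<noteq> 0" using mnz flin_0[OF f1] by auto
  have y2nz: "y2 \<noteq> 0" using mnz m2 olin_0[OF A] flin_0[OF f2] by auto
  have Ay2nz: "A y2 \<noteq> 0" using mnz m2 flin_0[OF f2] by auto
  have y3nz: "y3 \<noteq> 0" using mnz m3 olin_0[OF B] flin_0[OF f3] by auto
  have By3nz: "B y3 \<noteq> 0" using mnz m3 flin_0[OF f3] by auto
  have h1: "\<And>x. cscale (\<phi>2 x) (A y2) = A (B (C x)) - A (C (B x))"
    using K2 unfolding commutator_def by (metis LS(2) LS(5))
  have h2: "\<And>x. cscale (\<phi>2 (A x)) y2 = B (C (A x)) - C (B (A x))"
    using K2 unfolding commutator_def by metis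
  have h3: "\<And>x. cscale (\<phi>3 x) (B y3) = B (C (A x)) - B (A (C x))"
    using K3 unfolding commutator_def by (metis LS(7) LS(10))
  have h4: "\<And>x. cscale (\<phi>3 (B x)) y3 = C (A (B x)) - A (C (B x))"
    using K3 unfolding commutator_def by metis
  have h5: "\<And>x. cscale (\<phi> x) (C y) = C (A (B x)) - C (B (A x))"
    using K1 unfolding commutator_def by (metis LS(12) LS(15))
  have h6: "\<And>x. cscale (\<phi> (C x)) y = A (B (C x)) - B (A (C x))"
    using K1 unfolding commutator_def by metis
  have JAC: "\<And>x. cscale (\<phi>2 x) (A y2) - cscale (\<phi>2 (A x)) y2 + cscale (\<phi>3 x) (B y3)
      - cscale (\<phi>3 (B x)) y3 + cscale (\<phi> x) (C y) - cscale (\<phi> (C x)) y = 0"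
    unfolding h1 h2 h3 h4 h5 h6 by (simp add: algebra_simps)
  have G1: "\<phi>2 y * \<phi>3 (A y2) = \<phi>2 (A y) * \<phi>3 y2"
  proof -
    have "\<phi>3 (cscale (\<phi>2 y) (A y2) - cscale (\<phi>2 (A y)) y2 + cscale (\<phi>3 y) (B y3)
      - cscale (\<phi>3 (B y)) y3 + cscale (\<phi> y) (C y) - cscale (\<phi> (C y)) y) = 0"
      using JAC[of y] flin_0[OF f3] by simp
    then show ?thesis using t1 t3 m3 by (simp add: flin_simps[OF f3] algebra_simps)
  qed
  have G2: "\<phi>3 y2 * \<phi> (B y3) = \<phi>3 (B y2) * \<phi> y3"
  proof -
    have "\<phi> (cscale (\<phi>2 y2) (A y2) - cscale (\<phi>2 (A y2)) y2 + cscale (\<phi>3 y2) (B y3)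
      - cscale (\<phi>3 (B y2)) y3 + cscale (\<phi> y2) (C y) - cscale (\<phi> (C y2)) y) = 0"
      using JAC[of y2] flin_0[OF f1] by simp
    then show ?thesis using t1 t2 m2 by (simp add: flin_simps[OF f1] algebra_simps)
  qed
  from d3 show False
  proof
    assume v3: "vpar (A y2) y3"
    from d4 show False
    proof
      assume "fpar (\<lambda>x. \<phi>2 (A x)) (\<lambda>x. - \<phi>3 x)"
      then have f4: "fpar (\<lambda>x. \<phi>2 (A x)) \<phi>3" by (rule fpar_neg)
      obtain k where "A y2 = cscale k y3" using vpar_nz[OF v3 y3nz] by blast
      then have "\<phi>3 (A y2) = 0" using t3 by (simp add: flin_simps[OF f3])
      then have g: "\<phi>2 (A y) * \<phi>3 y2 = 0" using G1 by simp
      obtain c where "\<forall>x. \<phi>3 x = c * \<phi>2 (A x)"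
        using fpar_nz[OF fpar_sym[OF f4], of y2] mnz m2 by auto
      then have "\<phi>2 (A y) \<noteq> 0" using c5 by auto
      then show False using g c4 by simp
    next
      assume v4: "vpar y2 (B y3)"
      from d5 show False
      proof
        assume "vpar (B y3) y"
        then have "\<phi>2 y = 0" using vchain[OF v4 _ By3nz y2nz f2 t2] by blast
        then show False using c2 by simp
      next
        assume "fpar \<phi>3 (\<lambda>x. - \<phi> (C x))"
        then have f5: "fpar \<phi>3 (\<lambda>x. \<phi> (C x))" by (rule fpar_neg)
        from d2 show False
        proof
          assume "vpar y (A y2)"
          then have "\<phi> y3 = 0" using vchain[OF _ v3 Ay2nz ynz f1 t1] by blast
          then show False using c6 by simp
        next
          assume "fpar (\<lambda>x. \<phi> (C x)) (\<lambda>x. - \<phi>2 x)"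
          then have f2': "fpar (\<lambda>x. \<phi> (C x)) \<phi>2" by (rule fpar_neg)
          have "\<phi>3 y2 = 0"
            using fchain[OF fpar_sym[OF f2'] fpar_sym[OF f5], of y "A y2" y2] mnz m2 t2 by simp
          then show False using c4 by simp
        qed
      qed
    qed
  next
    assume "fpar \<phi>2 (\<lambda>x. - \<phi>3 (B x))"
    then have f3': "fpar \<phi>2 (\<lambda>x. \<phi>3 (B x))" by (rule fpar_neg)
    from d4 show False
    proof
      assume v4: "vpar y2 (B y3)"
      obtain c where "\<forall>x. \<phi>3 (B x) = c * \<phi>2 x"
        using fpar_nz[OF fpar_sym[OF f3'], of "A y2"] mnz m2 by auto
      then have "\<phi>3 (B y2) = 0" using t2 by simp
      then have g: "\<phi>3 y2 * \<phi> (B y3) = 0" using G2 by simp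
      obtain k where "k \<noteq> 0" "B y3 = cscale k y2" using vpar_nz2[OF vpar_sym[OF v4] By3nz y2nz] by blast
      then have "\<phi> (B y3) \<noteq> 0" using c1 by (simp add: flin_simps[OF f1])
      then show False using g c4 by simp
    next
      assume "fpar (\<lambda>x. \<phi>2 (A x)) (\<lambda>x. - \<phi>3 x)"
      then have f4: "fpar (\<lambda>x. \<phi>2 (A x)) \<phi>3" by (rule fpar_neg)
      from d1 show False
      proof
        assume v1: "vpar (C y) y2"
        from d6 show False
        proof
          assume "vpar y3 (C y)"
          then have "\<phi>2 y3 = 0" using vchain[OF vpar_sym[OF v1] vpar_sym Cynz y2nz f2 t2] by blast
          then show False using c3 by simp
        next
          assume "fpar (\<lambda>x. \<phi>3 (B x)) (\<lambda>x. - \<phi> x)"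
          then have f6: "fpar (\<lambda>x. \<phi>3 (B x)) \<phi>" by (rule fpar_neg)
          have "\<phi> y2 = 0" using fchain[OF f3' f6, of y3 "A y2" y2] mnz m2 m3 t2 by simp
          then show False using c1 by simp
        qed
      next
        assume "fpar \<phi> (\<lambda>x. - \<phi>2 (A x))"
        then have f1': "fpar \<phi> (\<lambda>x. \<phi>2 (A x))" by (rule fpar_neg)
        have "\<phi>3 y = 0" using fchain[OF f1' f4, of y2 "C y" y] mnz m2 t1 by simp
        then show False using c5 by simp
      qed
    qed
  qed
qed

end

theorem mainTheorem1:
  fixes \<S> :: "('a::complex_banach \<Rightarrow> 'a) set"
    and A B :: "'a \<Rightarrow> 'a" and y :: 'a and \<phi> :: "'a \<Rightarrow> complex"
  assumes "cdim_ge_two TYPE('a)"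
    and "\<forall>T\<in>\<S>. bop T"
    and "\<forall>S\<in>\<S>. \<forall>T\<in>\<S>. S \<circ> T \<in> \<S>"
    and "\<forall>S\<in>\<S>. \<forall>T\<in>\<S>. rank_le_one (commutator S T)"
    and "A \<in> \<S>" and "B \<in> \<S>"
    and "y \<noteq> 0" and "cfunctional \<phi>" and "\<phi> \<noteq> (\<lambda>x. 0)"
    and "commutator A B = tensor_op y \<phi>"
  shows "\<forall>C \<in> \<S> \<union> {id}. \<phi> (C y) = 0"
proof -
  define SS where "SS = \<S> \<union> {id}"
  have bo: "olin T" if "bop T" for T :: "'a \<Rightarrow> 'a"
    using that unfolding bop_def olin_def by (auto intro: linear_add[OF bounded_linear.linear])
  have idl: "olin (id :: 'a \<Rightarrow> 'a)" unfolding olin_def by simp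
  have r0: "rank_le_one (\<lambda>x::'a. 0 :: 'a)" unfolding rank_le_one_def by (intro exI[of _ 0]) simp
  have cid1: "commutator id Y = (\<lambda>x. 0)" for Y :: "'a \<Rightarrow> 'a" unfolding commutator_def by simp
  have cid2: "commutator Y id = (\<lambda>x. 0)" for Y :: "'a \<Rightarrow> 'a" unfolding commutator_def by simp
  interpret rsg SS
  proof
    fix X assume "X \<in> SS" then show "olin X" using assms(2) bo idl unfolding SS_def by auto
  next
    fix X Y assume "X \<in> SS" "Y \<in> SS" then show "X \<circ> Y \<in> SS"
      using assms(3) unfolding SS_def by auto
  next
    fix X Y assume "X \<in> SS" "Y \<in> SS" then show "rank_le_one (commutator X Y)"
      using assms(4) cid1 cid2 r0 unfolding SS_def by auto
  qed
  have f1: "flin \<phi>" using assms(8) unfolding cfunctional_def flin_def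
    by (auto intro: linear_add[OF bounded_linear.linear])
  have K1: "\<forall>x. commutator A B x = cscale (\<phi> x) y"
    using assms(10) unfolding tensor_op_def by (metis)
  show ?thesis
  proof
    fix C assume "C \<in> \<S> \<union> {id}"
    then have "C \<in> SS" unfolding SS_def .
    then show "\<phi> (C y) = 0" using main[of A B C \<phi> y] assms(5,6) f1 K1 unfolding SS_def by auto
  qed
qed

end
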